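(* There is an absolute constant $\beta>0$ and $n_0$ such that the following holds for all $n\ge n_0$. Let $F$ be an $n$-vertex graph and $G\subseteq K_n$ an $n$-vertex graph, and suppose that $F$ is guest-good with value $t$ and $G$ is host-$\beta$-good. Then there is a copy $F_0$ of $F$ in $K_n$ with $\left||E(F_0)\cap E(G)|-\frac{e(F)}{2}\right|\ge\beta t$.
   Context: For a vertex $u$ and set $S$, $N_S(u)$ is the set of neighbors of $u$ in $S$ and $d_S(u)=|N_S(u)|$. An $n$-vertex graph $F$ is guest-good with value $t$ if there is a partition $V(F)=U\cup V$ with $|U|=\lfloor n/2\rfloor$, distinct vertices $u_1,u_1',\dots,u_m,u_m'\in U$ with $m\le0.05n$, and integers $d_1,\dots,d_m\ge1$, such that $t=\sum_{i=1}^m\sqrt{d_i}$ and for every $i\in[m]$: (1) $|N_V(u_i)\setminus N_V(u_i')|\ge0.01d_i$; (2) $|N_V(u_i)\setminus N_V(u_i')|\le\frac23|V|$ and $|N_V(u_i')\setminus N_V(u_i)|\le\frac23|V|$; (3) $U$ is an independent set in $F$, or $|d_V(u_i)-d_V(u_i')|\le20\sqrt{d_i}$. An $n$-vertex graph $G$ is host-$\beta$-good if there is a partition $V(G)=X\cup Y$ with $|X|=\lfloor n/2\rfloor$ and distinct vertices $x_1,x_1',\dots,x_m,x_m'\in X$ with $m=0.05n$, such that for every $1\le i\le m$: (1) $|d_Y(x_i)-d_Y(x_i')|\le\beta n$; (2) $0.02|Y|\le|N_Y(x_i)\triangle N_Y(x_i')|\le0.98|Y|$; (3) $0.1|Y|\le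 d_Y(x_i),d_Y(x_i')\le0.9|Y|$. Degrees for $F$ are in $F$ and for $G$ are in $G$. A copy of $F$ in $K_n$ is a subgraph of $K_n$ isomorphic to $F$. *)

theory Defs
  imports Complex_Main
begin

definition simple_graph :: "nat \<Rightarrow> nat set set \<Rightarrow> bool" where
  "simple_graph n E \<longleftrightarrow> E \<subseteq> {e. \<exists>u v. e = {u, v} \<and> u \<noteq> v \<and> u < n \<and> v < n}"

definition nbrs :: "nat set set \<Rightarrow> nat set \<Rightarrow> nat \<Rightarrow> nat set" where
  "nbrs E S u = {v \<in> S. {u, v} \<in> E}"

definition deg :: "nat set set \<Rightarrow> nat set \<Rightarrow> nat \<Rightarrow> nat" where
  "deg E S u = card (nbrs E S u)"

definition independent :: "nat set set \<Rightarrow> nat set \<Rightarrow> bool" where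
  "independent E S \<longleftrightarrow> (\<forall>u\<in>S. \<forall>v\<in>S. {u, v} \<notin> E)"

definition guest_good :: "nat \<Rightarrow> nat set set \<Rightarrow> real \<Rightarrow> bool" where
  "guest_good n F t \<longleftrightarrow>
    (\<exists>U V m (u :: nat \<Rightarrow> nat) (u' :: nat \<Rightarrow> nat) (d :: nat \<Rightarrow> nat).
       U \<union> V = {..<n} \<and> U \<inter> V = {} \<and> card U = n div 2 \<and>
       real m \<le> 0.05 * real n \<and>
       distinct (map u [0..<m] @ map u' [0..<m]) \<and>
       (\<forall>i<m. u i \<in> U \<and> u' i \<in> U \<and> d i \<ge> 1) \<and>
       t = (\<Sum>i<m. sqrt (real (d i))) \<and>
       (\<forall>i<m.
          real (card (nbrs F V (u i) - nbrs F V (u' i))) \<ge> 0.01 * real (d i) \<and>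
          real (card (nbrs F V (u i) - nbrs F V (u' i))) \<le> 2/3 * real (card V) \<and>
          real (card (nbrs F V (u' i) - nbrs F V (u i))) \<le> 2/3 * real (card V) \<and>
          (independent F U \<or>
           \<bar>real (deg F V (u i)) - real (deg F V (u' i))\<bar> \<le> 20 * sqrt (real (d i)))))"

definition host_good :: "nat \<Rightarrow> real \<Rightarrow> nat set set \<Rightarrow> bool" where
  "host_good n \<beta> G \<longleftrightarrow>
    (\<exists>X Y (x :: nat \<Rightarrow> nat) (x' :: nat \<Rightarrow> nat).
       let m = nat \<lfloor>0.05 * real n\<rfloor> in
       X \<union> Y = {..<n} \<and> X \<inter> Y = {} \<and> card X = n div 2 \<and>
       distinct (map x [0..<m] @ map x' [0..<m]) \<and>
       (\<forall>i<m. x i \<in> X \<and> x' i \<in> X \<and>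
          \<bar>real (deg G Y (x i)) - real (deg G Y (x' i))\<bar> \<le> \<beta> * real n \<and>
          0.02 * real (card Y) \<le> real (card (nbrs G Y (x i) \<union> nbrs G Y (x' i)
                                   - nbrs G Y (x i) \<inter> nbrs G Y (x' i))) \<and>
          real (card (nbrs G Y (x i) \<union> nbrs G Y (x' i)
                     - nbrs G Y (x i) \<inter> nbrs G Y (x' i))) \<le> 0.98 * real (card Y) \<and>
          0.1 * real (card Y) \<le> real (deg G Y (x i)) \<and>
          real (deg G Y (x i)) \<le> 0.9 * real (card Y) \<and>
          0.1 * real (card Y) \<le> real (deg G Y (x' i)) \<and>
          real (deg G Y (x' i)) \<le> 0.9 * real (card Y)))"

definition is_copy :: "nat \<Rightarrow> nat set set \<Rightarrow> nat set set \<Rightarrow> bool" where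
  "is_copy n F F0 \<longleftrightarrow> (\<exists>\<pi>. bij_betw \<pi> {..<n} {..<n} \<and> F0 = (\<lambda>e. \<pi> ` e) ` F)"

end

theory Submission
  imports Defs "HOL-Library.FuncSet"
begin

fun avg :: "real list \<Rightarrow> (real \<Rightarrow> real) \<Rightarrow> real \<Rightarrow> real" where
  "avg [] f c = f c"
| "avg (w#ws) f c = (avg ws f (c + w) + avg ws f (c - w)) / 2"

lemma avg_lin: "avg ws (\<lambda>s. a * f s + b * g s) c = a * avg ws f c + b * avg ws g c"
  by (induction ws arbitrary: c) (simp_all add: algebra_simps add_divide_distrib)

lemma avg_mono: "(\<And>s. f s \<le> g s) \<Longrightarrow> avg ws f c \<le> avg ws g c"
  by (induction ws arbitrary: c) (simp_all add: add_mono divide_right_mono)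

lemma avg_shift: "avg ws (\<lambda>s. f (s + e)) c = avg ws f (c + e)"
  by (induction ws arbitrary: c) (simp_all add: algebra_simps)

lemma avg_sq: "avg ws (\<lambda>s. s^2) c = c^2 + sum_list (map (\<lambda>w. w^2) ws)"
  by (induction ws arbitrary: c) (simp_all add: power2_eq_square algebra_simps)

lemma avg_4: "avg ws (\<lambda>s. s^4) c \<le> c^4 + 6*c^2*sum_list (map (\<lambda>w. w^2) ws) + 3*(sum_list (map (\<lambda>w. w^2) ws))^2"
proof (induction ws arbitrary: c)
  case Nil then show ?case by simp
next
  case (Cons w ws)
  define Q where "Q = sum_list (map (\<lambda>w. w^2) ws)"
  have "avg (w#ws) (\<lambda>s. s^4) c \<le> ((c+w)^4 + 6*(c+w)^2*Q + 3*Q^2 + ((c-w)^4 + 6*(c-w)^2*Q + 3*Q^2))/2"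
    using Cons[of "c+w"] Cons[of "c-w"] by (simp add: Q_def)
  also have "\<dots> \<le> c^4 + 6*c^2*(w^2+Q) + 3*(w^2+Q)^2"
  proof -
    have w4: "0 \<le> w*(w*(w*w))" by (metis mult.assoc mult_nonneg_nonneg zero_le_square)
    show ?thesis using w4 by (simp add: power2_eq_square power4_eq_xxxx algebra_simps)
  qed
  finally show ?case by (simp add: Q_def)
qed

lemma l2: fixes x T :: real assumes "x \<ge> 0" "T > 0" shows "x*(x*(x-2*T)^2 + 4*T*(x-T)^2) \<ge> 0"
  using assms by (intro mult_nonneg_nonneg add_nonneg_nonneg) auto
lemma l3: fixes x T :: real shows "x*(x*(x-2*T)^2 + 4*T*(x-T)^2) = 4*T^3*x - 4*T^2*x^2 + x^4"
    by (simp add: power2_eq_square power3_eq_cube power4_eq_xxxx algebra_simps)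
lemma pt_abs0: fixes x T :: real assumes "x \<ge> 0" "T > 0" shows "x \<ge> x^2/T - x^4/(4*T^3)"
proof -
  have T3: "4*T^3 > 0" using assms by simp
  have e: "x^2/T = (4*T^2*x^2)/(4*T^3)" using assms by (simp add: power2_eq_square power3_eq_cube)
  have "x^2/T - x^4/(4*T^3) = (4*T^2*x^2 - x^4)/(4*T^3)" unfolding e by (simp add: diff_divide_distrib)
  also have "\<dots> \<le> x" using T3 l2[OF assms] l3[of x T] by (simp add: pos_divide_le_eq algebra_simps)
  finally show ?thesis .
qed
lemma pt_abs: fixes s T :: real assumes "T > 0" shows "\<bar>s\<bar> \<ge> s^2/T - s^4/(4*T^3)"
  using pt_abs0[of "\<bar>s\<bar>" T] assms by simp

lemma avg_abs: "avg ws abs c \<ge> 13/32 * sqrt (sum_list (map (\<lambda>w. w^2) ws))"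
proof -
  define Q where "Q = sum_list (map (\<lambda>w. w^2) ws)"
  define R where "R = c^2 + Q"
  have Q0: "Q \<ge> 0" unfolding Q_def by (induction ws) auto
  show ?thesis
  proof (cases "R = 0")
    case True
    then have "Q = 0" using Q0 zero_le_power2[of c] unfolding R_def by linarith
    moreover have "avg ws abs c \<ge> avg ws (\<lambda>s. 0) c" by (rule avg_mono) simp
    moreover have "avg ws (\<lambda>s. 0) c = 0" using avg_lin[of ws 0 "\<lambda>s. 0" 0 "\<lambda>s. 0" c] by simp
    ultimately show ?thesis by (simp add: Q_def)
  next
    case False
    have R0: "R > 0" using False Q0 zero_le_power2[of c] unfolding R_def by linarith
    define T where "T = 2 * sqrt R"
    have T0: "T > 0" using R0 by (simp add: T_def)
    have i1: "avg ws abs c \<ge> avg ws (\<lambda>s. (1/T) * s^2 + (-1/(4*T^3)) * s^4) c"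
      by (rule avg_mono) (use pt_abs[OF T0] in auto)
    have i2: "avg ws (\<lambda>s. (1/T) * s^2 + (-1/(4*T^3)) * s^4) c = (1/T) * R + (-1/(4*T^3)) * avg ws (\<lambda>s. s^4) c"
      using avg_lin[of ws "1/T" "\<lambda>s. s^2" "-1/(4*T^3)" "\<lambda>s. s^4" c] by (simp add: avg_sq R_def Q_def)
    have i3: "(1/T) * R + (-1/(4*T^3)) * avg ws (\<lambda>s. s^4) c \<ge> (1/T) * R - (3*R^2)/(4*T^3)"
    proof -
      have c4: "0 \<le> c*(c*(c*c))" by (metis mult.assoc mult_nonneg_nonneg zero_le_square)
      have "c^4 + 6*c^2*Q + 3*Q^2 \<le> 3*R^2" unfolding R_def using c4
        by (simp add: power2_eq_square power4_eq_xxxx algebra_simps)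
      then have "avg ws (\<lambda>s. s^4) c \<le> 3*R^2"
        using avg_4[of ws c] unfolding Q_def by linarith
      then show ?thesis using T0 by (simp add: divide_simps)
    qed
    have i4: "(1/T) * R - (3*R^2)/(4*T^3) = 13/32 * sqrt R"
    proof -
      define r where "r = sqrt R"
      have r0: "r > 0" using R0 by (simp add: r_def)
      have Rr: "R = r^2" using R0 by (simp add: r_def)
      have "(1/T) * R - (3*R^2)/(4*T^3) = r/2 - 3*r/32" unfolding T_def r_def[symmetric] Rr using r0
        by (simp add: power2_eq_square power3_eq_cube power4_eq_xxxx)
      then show ?thesis by (simp add: r_def)
    qed
    have "avg ws abs c \<ge> 13/32 * sqrt R" using i1 i2 i3 i4 by linarith
    moreover have "sqrt R \<ge> sqrt Q" unfolding R_def by simp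
    ultimately show ?thesis unfolding Q_def by linarith
  qed
qed

definition tr :: "nat \<Rightarrow> nat \<Rightarrow> nat \<Rightarrow> nat" where
  "tr a z x = (if x = a then z else if x = z then a else x)"

lemma tr_tr[simp]: "tr a z (tr a z x) = x" by (simp add: tr_def)
lemma tr_other[simp]: "x \<noteq> a \<Longrightarrow> x \<noteq> z \<Longrightarrow> tr a z x = x" by (simp add: tr_def)
lemma tr_a[simp]: "tr a z a = z" by (simp add: tr_def)
lemma tr_z[simp]: "tr a z z = a" by (simp add: tr_def)

lemma comp_tr_tr[simp]: "\<sigma> \<circ> tr a z \<circ> tr a z = \<sigma>" by (rule ext) simp

fun swavg :: "(nat \<times> nat) list \<Rightarrow> ((nat \<Rightarrow> nat) \<Rightarrow> real) \<Rightarrow> (nat \<Rightarrow> nat) \<Rightarrow> real" where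
  "swavg [] \<phi> \<sigma> = \<phi> \<sigma>"
| "swavg (p#ps) \<phi> \<sigma> = (swavg ps \<phi> \<sigma> + swavg ps \<phi> (\<sigma> \<circ> tr (fst p) (snd p))) / 2"

lemma reindex_tr:
  assumes "\<forall>\<sigma>\<in>B. \<sigma> \<circ> tr a z \<in> B"
  shows "(\<Sum>\<sigma>\<in>B. h (\<sigma> \<circ> tr a z)) = (\<Sum>\<sigma>\<in>B. (h \<sigma> :: real))"
proof -
  have "bij_betw (\<lambda>\<sigma>. \<sigma> \<circ> tr a z) B B"
    by (rule bij_betw_byWitness[where f'="\<lambda>\<sigma>. \<sigma> \<circ> tr a z"]) (use assms in auto)
  then show ?thesis using sum.reindex_bij_betw[of "\<lambda>\<sigma>. \<sigma> \<circ> tr a z" B B h] by simp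
qed

lemma swavg_sum:
  assumes "\<forall>p\<in>set ps. \<forall>\<sigma>\<in>B. \<sigma> \<circ> tr (fst p) (snd p) \<in> B"
  shows "(\<Sum>\<sigma>\<in>B. swavg ps \<phi> \<sigma>) = (\<Sum>\<sigma>\<in>B. \<phi> \<sigma>)"
  using assms
proof (induction ps)
  case Nil then show ?case by simp
next
  case (Cons p ps)
  have r: "(\<Sum>\<sigma>\<in>B. swavg ps \<phi> (\<sigma> \<circ> tr (fst p) (snd p))) = (\<Sum>\<sigma>\<in>B. swavg ps \<phi> \<sigma>)"
  proof (rule reindex_tr)
    show "\<forall>\<sigma>\<in>B. \<sigma> \<circ> tr (fst p) (snd p) \<in> B" using Cons.prems unfolding comp_def by simp
  qed
  have "(\<Sum>\<sigma>\<in>B. swavg (p#ps) \<phi> \<sigma>) = ((\<Sum>\<sigma>\<in>B. swavg ps \<phi> \<sigma>) + (\<Sum>\<sigma>\<in>B. swavg ps \<phi> (\<sigma> \<circ> tr (fst p) (snd p))))/2"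
    by (simp only: swavg.simps sum_divide_distrib[symmetric] sum.distrib)
  also have "\<dots> = (\<Sum>\<sigma>\<in>B. swavg ps \<phi> \<sigma>)" using r by simp
  also have "\<dots> = (\<Sum>\<sigma>\<in>B. \<phi> \<sigma>)" using Cons by simp
  finally show ?case .
qed

definition Xf :: "nat set \<Rightarrow> (nat \<Rightarrow> real) \<Rightarrow> (nat \<Rightarrow> real) \<Rightarrow> (nat \<Rightarrow> nat) \<Rightarrow> real" where
  "Xf V \<chi> g \<sigma> = (\<Sum>b\<in>V. \<chi> b * g (\<sigma> b))"

definition Df :: "(nat \<Rightarrow> real) \<Rightarrow> (nat \<Rightarrow> real) \<Rightarrow> (nat \<Rightarrow> nat) \<Rightarrow> nat \<times> nat \<Rightarrow> real" where
  "Df \<chi> g \<sigma> p = (\<chi> (fst p) - \<chi> (snd p)) * (g (\<sigma> (snd p)) - g (\<sigma> (fst p)))"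

lemma Xf_tr:
  assumes "finite V" "a \<in> V" "z \<in> V" "a \<noteq> z"
  shows "Xf V \<chi> g (\<sigma> \<circ> tr a z) = Xf V \<chi> g \<sigma> + Df \<chi> g \<sigma> (a, z)"
proof -
  let ?R = "V - {a} - {z}"
  have z1: "z \<in> V - {a}" using assms by auto
  have eq: "(\<Sum>b\<in>V. f b) = f a + (f z + (\<Sum>b\<in>?R. f b :: real))" for f
  proof -
    have "sum f V = f a + sum f (V-{a})" by (rule sum.remove[OF assms(1,2)])
    moreover have "sum f (V - {a}) = f z + sum f (V-{a}-{z})" by (rule sum.remove) (use assms z1 in auto)
    ultimately show ?thesis by simp
  qed
  have rest: "(\<Sum>b\<in>?R. \<chi> b * g ((\<sigma> \<circ> tr a z) b)) = (\<Sum>b\<in>?R. \<chi> b * g (\<sigma> b))"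
    by (rule sum.cong) auto
  show ?thesis unfolding Xf_def Df_def
    using eq[of "\<lambda>b. \<chi> b * g ((\<sigma> \<circ> tr a z) b)"] eq[of "\<lambda>b. \<chi> b * g (\<sigma> b)"] rest assms(4)
    by (simp add: algebra_simps)
qed

lemma swavg_avg:
  assumes "finite V" "distinct (map fst ps @ map snd ps)" "\<forall>p\<in>set ps. fst p \<in> V \<and> snd p \<in> V"
  shows "swavg ps (\<lambda>\<sigma>. f (Xf V \<chi> g \<sigma>)) \<sigma> =
         avg (map (\<lambda>p. Df \<chi> g \<sigma> p / 2) ps) f (Xf V \<chi> g \<sigma> + sum_list (map (\<lambda>p. Df \<chi> g \<sigma> p / 2) ps))"
  using assms(2,3)
proof (induction ps arbitrary: \<sigma>)
  case Nil then show ?case by simp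
next
  case (Cons p ps)
  obtain a z where p: "p = (a, z)" by fastforce
  have az: "a \<noteq> z" "a \<in> V" "z \<in> V" using Cons.prems p by auto
  have nin: "\<forall>q\<in>set ps. fst q \<noteq> a \<and> fst q \<noteq> z \<and> snd q \<noteq> a \<and> snd q \<noteq> z"
    using Cons.prems(1) p by (auto simp: set_zip_leftD)
  have mp: "map (\<lambda>q. Df \<chi> g (\<sigma> \<circ> tr a z) q / 2) ps = map (\<lambda>q. Df \<chi> g \<sigma> q / 2) ps"
    by (rule map_cong) (use nin in \<open>auto simp: Df_def\<close>)
  have IH1: "swavg ps (\<lambda>\<sigma>. f (Xf V \<chi> g \<sigma>)) \<sigma> = avg (map (\<lambda>p. Df \<chi> g \<sigma> p / 2) ps) f (Xf V \<chi> g \<sigma> + sum_list (map (\<lambda>p. Df \<chi> g \<sigma> p / 2) ps))"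
    using Cons by auto
  have IH2': "swavg ps (\<lambda>\<sigma>. f (Xf V \<chi> g \<sigma>)) (\<sigma> \<circ> tr a z) = avg (map (\<lambda>p. Df \<chi> g (\<sigma> \<circ> tr a z) p / 2) ps) f (Xf V \<chi> g (\<sigma> \<circ> tr a z) + sum_list (map (\<lambda>p. Df \<chi> g (\<sigma> \<circ> tr a z) p / 2) ps))"
    by (rule Cons.IH) (use Cons.prems in auto)
  have IH2: "swavg ps (\<lambda>\<sigma>. f (Xf V \<chi> g \<sigma>)) (\<sigma> \<circ> tr a z) = avg (map (\<lambda>p. Df \<chi> g \<sigma> p / 2) ps) f (Xf V \<chi> g \<sigma> + Df \<chi> g \<sigma> (a,z) + sum_list (map (\<lambda>p. Df \<chi> g \<sigma> p / 2) ps))"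
    using IH2' unfolding mp Xf_tr[OF assms(1) az(2,3,1)] .
  define ws where "ws = map (\<lambda>p. Df \<chi> g \<sigma> p / 2) ps"
  define R where "R = sum_list ws"
  define D where "D = Df \<chi> g \<sigma> (a,z)"
  have e1: "Xf V \<chi> g \<sigma> + (D / 2 + R) + D / 2 = Xf V \<chi> g \<sigma> + D + R" by simp
  have e2: "Xf V \<chi> g \<sigma> + (D / 2 + R) - D / 2 = Xf V \<chi> g \<sigma> + R" by simp
  show ?case using IH1 IH2 unfolding p
    by (simp add: ws_def[symmetric] R_def[symmetric] D_def[symmetric] e1 e2)
qed

definition Bs :: "nat set \<Rightarrow> nat set \<Rightarrow> (nat \<Rightarrow> nat) set" where
  "Bs V Y = {\<sigma> \<in> V \<rightarrow>\<^sub>E Y. bij_betw \<sigma> V Y}"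

lemma tr_bij: "a \<in> V \<Longrightarrow> z \<in> V \<Longrightarrow> bij_betw (tr a z) V V"
  by (rule bij_betw_byWitness[where f'="tr a z"]) (auto simp: tr_def)

lemma Bs_tr: assumes "a \<in> V" "z \<in> V" "\<sigma> \<in> Bs V Y" shows "\<sigma> \<circ> tr a z \<in> Bs V Y"
proof -
  have b: "bij_betw \<sigma> V Y" "\<sigma> \<in> V \<rightarrow>\<^sub>E Y" using assms(3) by (auto simp: Bs_def)
  have "bij_betw (\<sigma> \<circ> tr a z) V Y" using bij_betw_trans[OF tr_bij[OF assms(1,2)] b(1)] .
  moreover have "\<sigma> \<circ> tr a z \<in> V \<rightarrow>\<^sub>E Y"
  proof -
    have "\<forall>x\<in>V. tr a z x \<in> V" using assms(1,2) by (auto simp: tr_def)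
    moreover have "\<forall>x. x \<notin> V \<longrightarrow> tr a z x = x" using assms(1,2) by (auto simp: tr_def)
    ultimately show ?thesis using b(2) by (auto simp: PiE_iff extensional_def)
  qed
  ultimately show ?thesis by (simp add: Bs_def)
qed

lemma Bs_finite: "finite V \<Longrightarrow> finite Y \<Longrightarrow> finite (Bs V Y)"
  unfolding Bs_def by (rule finite_subset[of _ "V \<rightarrow>\<^sub>E Y"]) (auto intro: finite_PiE)

lemma Bs_ne: assumes "finite V" "finite Y" "card V = card Y" shows "Bs V Y \<noteq> {}"
proof -
  obtain f where f: "bij_betw f V Y" using finite_same_card_bij[OF assms] by blast
  have "restrict f V \<in> Bs V Y" unfolding Bs_def using f
    by (auto simp: bij_betw_def inj_on_def image_def)
  then show ?thesis by blast
qed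

lemma sum_indicator_card: "finite A \<Longrightarrow> (\<Sum>x\<in>A. if P x then 1 else 0) = real (card {x\<in>A. P x})"
  by (simp add: sum.If_cases Int_def conj_commute)

lemma pair_count:
  fixes \<gamma> :: real and g :: "nat \<Rightarrow> real"
  assumes fin: "finite V" "finite Y" "card V = card Y" and az: "a \<in> V" "z \<in> V" "a \<noteq> z"
    and g0: "\<gamma> \<ge> 0" and gc: "\<forall>y\<in>Y. real (card {y'\<in>Y. g y' \<noteq> g y}) \<ge> \<gamma> * card Y"
  shows "(\<Sum>\<sigma>\<in>Bs V Y. if g (\<sigma> a) \<noteq> g (\<sigma> z) then 1 else 0) \<ge> \<gamma> * card (Bs V Y)"
proof -
  define B where "B = Bs V Y"
  define I where "I = (\<lambda>\<sigma> w. if g (\<sigma> a) \<noteq> g (\<sigma> w) then 1 else (0::real))"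
  define S where "S = (\<Sum>\<sigma>\<in>B. I \<sigma> z)"
  have finB: "finite B" using Bs_finite fin unfolding B_def by blast
  have same: "(\<Sum>\<sigma>\<in>B. I \<sigma> w) = S" if w: "w \<in> V - {a}" for w
  proof (cases "w = z")
    case True then show ?thesis by (simp add: S_def)
  next
    case False
    have "(\<Sum>\<sigma>\<in>B. I \<sigma> w) = (\<Sum>\<sigma>\<in>B. I (\<sigma> \<circ> tr z w) z)"
      using az w False by (intro sum.cong) (auto simp: I_def)
    also have "\<dots> = S" unfolding S_def
      by (rule reindex_tr) (use Bs_tr az w in \<open>auto simp: B_def\<close>)
    finally show ?thesis .
  qed
  have "(\<Sum>w\<in>V-{a}. \<Sum>\<sigma>\<in>B. I \<sigma> w) = real (card (V - {a})) * S"
    using same by simp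
  moreover have "(\<Sum>w\<in>V-{a}. \<Sum>\<sigma>\<in>B. I \<sigma> w) \<ge> (\<Sum>\<sigma>\<in>B. \<gamma> * card Y)"
  proof -
    have "(\<Sum>w\<in>V-{a}. \<Sum>\<sigma>\<in>B. I \<sigma> w) = (\<Sum>\<sigma>\<in>B. \<Sum>w\<in>V-{a}. I \<sigma> w)" by (rule sum.swap)
    also have "\<dots> \<ge> (\<Sum>\<sigma>\<in>B. \<gamma> * card Y)"
    proof (rule sum_mono)
      fix \<sigma> assume s: "\<sigma> \<in> B"
      then have bj: "bij_betw \<sigma> V Y" by (simp add: B_def Bs_def)
      have "(\<Sum>w\<in>V-{a}. I \<sigma> w) = real (card {w\<in>V-{a}. g (\<sigma> a) \<noteq> g (\<sigma> w)})"
        unfolding I_def using fin by (simp add: sum_indicator_card)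
      also have "{w\<in>V-{a}. g (\<sigma> a) \<noteq> g (\<sigma> w)} = {w\<in>V. g (\<sigma> a) \<noteq> g (\<sigma> w)}" by auto
      also have "card \<dots> = card (\<sigma> ` {w\<in>V. g (\<sigma> a) \<noteq> g (\<sigma> w)})"
        using bj by (intro card_image[symmetric]) (auto simp: bij_betw_def inj_on_def)
      also have "\<sigma> ` {w\<in>V. g (\<sigma> a) \<noteq> g (\<sigma> w)} = {y\<in>Y. g y \<noteq> g (\<sigma> a)}"
        using bj by (auto simp: bij_betw_def)
      finally have "(\<Sum>w\<in>V-{a}. I \<sigma> w) = real (card {y\<in>Y. g y \<noteq> g (\<sigma> a)})" .
      moreover have "\<sigma> a \<in> Y" using bj az by (auto simp: bij_betw_def)
      ultimately show "\<gamma> * card Y \<le> (\<Sum>w\<in>V-{a}. I \<sigma> w)" using gc by auto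
    qed
    finally show ?thesis .
  qed
  ultimately have k: "real (card (V - {a})) * S \<ge> real (card B) * (\<gamma> * card Y)" by simp
  have cva: "card (V - {a}) = card Y - 1" "card Y \<ge> 2"
  proof -
    show "card (V - {a}) = card Y - 1" using fin az by simp
    have "{a, z} \<subseteq> V" using az by auto
    then have "card {a,z} \<le> card V" using fin by (intro card_mono) auto
    then show "card Y \<ge> 2" using az fin by simp
  qed
  have S0: "S \<ge> 0" unfolding S_def I_def by (intro sum_nonneg) auto
  have "real (card Y - 1) * S \<ge> real (card Y - 1) * (\<gamma> * card B)"
  proof -
    have "real (card Y - 1) * (\<gamma> * card B) \<le> real (card Y) * (\<gamma> * card B)"
      using g0 by (intro mult_right_mono) auto
    then show ?thesis using k cva by (simp add: algebra_simps)
  qed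
  then have "S \<ge> \<gamma> * card B" using cva by (simp add: mult_le_cancel_left)
  then show ?thesis unfolding S_def I_def B_def by simp
qed

lemma sum_list_ones: "sum_list (map (\<lambda>_. c) xs) = real (length xs) * (c::real)"
  by (induction xs) (auto simp: algebra_simps)

lemma sum_list_sum_swap:
  "(\<Sum>\<sigma>\<in>B. sum_list (map (\<lambda>p. f p \<sigma>) ps)) = sum_list (map (\<lambda>p. \<Sum>\<sigma>\<in>B. (f p \<sigma> :: real)) ps)"
  by (induction ps) (auto simp: sum.distrib)

lemma df_bound:
  fixes x y c :: real
  assumes "x \<in> {-1,0,1}" "y \<in> {-1,0,1}" "x \<noteq> y" "c \<in> {-1,0}"
  shows "((1 - c) * (y - x) / 2)^2 \<ge> 1/4"
  using assms by (auto simp: power2_eq_square)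

lemma anticonc:
  fixes \<chi> g :: "nat \<Rightarrow> real" and \<gamma> K :: real
  assumes fin: "finite V" "finite Y" "card V = card Y"
    and chi: "\<forall>b\<in>V. \<chi> b \<in> {-1,0,1}" and gint: "\<forall>y\<in>Y. g y \<in> {-1,0,1}"
    and Acard: "card {b\<in>V. \<chi> b = 1} \<le> 2 * card (V - {b\<in>V. \<chi> b = 1})"
    and g0: "\<gamma> \<ge> 0" and gc: "\<forall>y\<in>Y. real (card {y'\<in>Y. g y' \<noteq> g y}) \<ge> \<gamma> * card Y"
  shows "(\<Sum>\<sigma>\<in>Bs V Y. \<bar>Xf V \<chi> g \<sigma> - K\<bar>) \<ge> card (Bs V Y) * (13/64 * \<gamma> * sqrt (card {b\<in>V. \<chi> b = 1} / 2))"
proof -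
  define A where "A = {b\<in>V. \<chi> b = 1}"
  define B where "B = Bs V Y"
  define k where "k = min (card A) (card (V - A))"
  define as where "as = take k (sorted_list_of_set A)"
  define zs where "zs = take k (sorted_list_of_set (V - A))"
  define ps where "ps = zip as zs"
  have finA: "finite A" "finite (V - A)" using fin by (auto simp: A_def)
  have las: "length as = k" "length zs = k" using finA by (auto simp: as_def zs_def k_def)
  have das: "distinct as" "distinct zs" by (simp_all add: as_def zs_def)
  have sas: "set as \<subseteq> A" "set zs \<subseteq> V - A" using finA
    by (auto simp: as_def zs_def dest: in_set_takeD)
  have mps: "map fst ps = as" "map snd ps = zs" using las by (simp_all add: ps_def)
  have lps: "length ps = k" using las by (simp add: ps_def)
  have dist: "distinct (map fst ps @ map snd ps)" unfolding mps using das sas by auto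
  have inps: "fst p \<in> A \<and> snd p \<in> V - A" if "p \<in> set ps" for p
    using that sas set_zip_leftD[of "fst p" "snd p" as zs] set_zip_rightD[of "fst p" "snd p" as zs]
    unfolding ps_def by auto
  have inV: "\<forall>p\<in>set ps. fst p \<in> V \<and> snd p \<in> V" using inps by (auto simp: A_def)
  have finB: "finite B" using Bs_finite fin by (simp add: B_def)
  have trB: "\<forall>p\<in>set ps. \<forall>\<sigma>\<in>B. \<sigma> \<circ> tr (fst p) (snd p) \<in> B"
    using Bs_tr inV unfolding B_def by blast
  define N where "N \<sigma> = sum_list (map (\<lambda>p. if g (\<sigma> (fst p)) \<noteq> g (\<sigma> (snd p)) then 1 else (0::real)) ps)"
    for \<sigma> :: "nat \<Rightarrow> nat"
  have Nk: "N \<sigma> \<le> k" for \<sigma>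
  proof -
    have "N \<sigma> \<le> sum_list (map (\<lambda>_. 1) ps)" unfolding N_def by (rule sum_list_mono) auto
    then show ?thesis using lps sum_list_ones[of 1 ps] by simp
  qed
  have N0: "N \<sigma> \<ge> 0" for \<sigma> unfolding N_def by (rule sum_list_nonneg) auto
  have step1: "(\<Sum>\<sigma>\<in>B. \<bar>Xf V \<chi> g \<sigma> - K\<bar>) = (\<Sum>\<sigma>\<in>B. swavg ps (\<lambda>\<sigma>. \<bar>Xf V \<chi> g \<sigma> - K\<bar>) \<sigma>)"
    using swavg_sum[OF trB] by simp
  have step2: "swavg ps (\<lambda>\<sigma>. \<bar>Xf V \<chi> g \<sigma> - K\<bar>) \<sigma> \<ge> 13/32 * sqrt (N \<sigma> / 4)" if s: "\<sigma> \<in> B" for \<sigma>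
  proof -
    define ws where "ws = map (\<lambda>p. Df \<chi> g \<sigma> p / 2) ps"
    define c where "c = Xf V \<chi> g \<sigma> + sum_list ws"
    have "swavg ps (\<lambda>\<sigma>. (\<lambda>s. \<bar>s + - K\<bar>) (Xf V \<chi> g \<sigma>)) \<sigma> = avg ws (\<lambda>s. \<bar>s + - K\<bar>) c"
      unfolding ws_def c_def by (rule swavg_avg[OF fin(1) dist inV])
    also have "\<dots> = avg ws abs (c + - K)" by (rule avg_shift)
    also have "\<dots> \<ge> 13/32 * sqrt (sum_list (map (\<lambda>w. w^2) ws))" by (rule avg_abs)
    finally have i1: "swavg ps (\<lambda>\<sigma>. \<bar>Xf V \<chi> g \<sigma> - K\<bar>) \<sigma> \<ge> 13/32 * sqrt (sum_list (map (\<lambda>w. w^2) ws))"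
      by simp
    have "sum_list (map (\<lambda>w. w^2) ws) \<ge> sum_list (map (\<lambda>p. (1/4) * (if g (\<sigma> (fst p)) \<noteq> g (\<sigma> (snd p)) then 1 else (0::real))) ps)"
      unfolding ws_def map_map
    proof (rule sum_list_mono)
      fix p assume p: "p \<in> set ps"
      have bj: "bij_betw \<sigma> V Y" using s by (simp add: B_def Bs_def)
      have pa: "\<chi> (fst p) = 1" "\<chi> (snd p) \<in> {-1,0}" using inps[OF p] chi by (auto simp: A_def)
      have ga: "g (\<sigma> (fst p)) \<in> {-1,0,1}" "g (\<sigma> (snd p)) \<in> {-1,0,1}"
        using inV p gint bj by (auto simp: bij_betw_def)
      show "(1/4) * (if g (\<sigma> (fst p)) \<noteq> g (\<sigma> (snd p)) then 1 else 0) \<le> ((\<lambda>w. w^2) \<circ> (\<lambda>p. Df \<chi> g \<sigma> p / 2)) p"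
      proof (cases "g (\<sigma> (fst p)) \<noteq> g (\<sigma> (snd p))")
        case True
        then show ?thesis using df_bound[OF ga(1) ga(2) True pa(2)] pa(1) by (simp add: Df_def)
      qed simp
    qed
    also have "sum_list (map (\<lambda>p. (1/4) * (if g (\<sigma> (fst p)) \<noteq> g (\<sigma> (snd p)) then 1 else (0::real))) ps) = N \<sigma> / 4"
      unfolding N_def by (induction ps) auto
    finally have "sum_list (map (\<lambda>w. w^2) ws) \<ge> N \<sigma> / 4" .
    then have "sqrt (sum_list (map (\<lambda>w. w^2) ws)) \<ge> sqrt (N \<sigma> / 4)" by simp
    with i1 show ?thesis by linarith
  qed
  have step3: "sqrt (N \<sigma> / 4) \<ge> N \<sigma> / (2 * sqrt k)" for \<sigma>
  proof (cases "k = 0")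
    case True then show ?thesis using Nk[of \<sigma>] N0[of \<sigma>] by simp
  next
    case False
    have "sqrt (N \<sigma>) \<le> sqrt k" using Nk[of \<sigma>] N0[of \<sigma>] by simp
    then have "sqrt (N \<sigma>) * sqrt (N \<sigma>) \<le> sqrt (N \<sigma>) * sqrt k"
      using N0[of \<sigma>] by (intro mult_left_mono) auto
    then have "N \<sigma> \<le> sqrt (N \<sigma>) * sqrt k"
      using N0[of \<sigma>] by simp
    moreover have "sqrt (N \<sigma> / 4) = sqrt (N \<sigma>) / 2" by (simp add: real_sqrt_divide)
    moreover have sk: "sqrt k > 0" using False by simp
    ultimately have "N \<sigma> / (2 * sqrt k) \<le> (sqrt (N \<sigma>) * sqrt k) / (2 * sqrt k)"
      by (intro divide_right_mono) auto
    also have "\<dots> = sqrt (N \<sigma>) / 2" using sk by simp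
    finally show ?thesis by (simp add: real_sqrt_divide)
  qed
  have step4: "(\<Sum>\<sigma>\<in>B. N \<sigma>) \<ge> k * (\<gamma> * card B)"
  proof -
    have "(\<Sum>\<sigma>\<in>B. N \<sigma>) = sum_list (map (\<lambda>p. \<Sum>\<sigma>\<in>B. if g (\<sigma> (fst p)) \<noteq> g (\<sigma> (snd p)) then 1 else (0::real)) ps)"
      unfolding N_def by (rule sum_list_sum_swap)
    also have "\<dots> \<ge> sum_list (map (\<lambda>p. \<gamma> * card B) ps)"
    proof (rule sum_list_mono)
      fix p assume p: "p \<in> set ps"
      have "fst p \<noteq> snd p" using inps[OF p] by auto
      then show "\<gamma> * card B \<le> (\<Sum>\<sigma>\<in>B. if g (\<sigma> (fst p)) \<noteq> g (\<sigma> (snd p)) then 1 else 0)"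
        unfolding B_def using pair_count[OF fin _ _ _ g0 gc] inV p by blast
    qed
    also have "sum_list (map (\<lambda>p. \<gamma> * card B) ps) = k * (\<gamma> * card B)"
      using sum_list_ones[of "\<gamma> * card B" ps] lps by simp
    finally show ?thesis .
  qed
  have kA: "real k \<ge> card A / 2" using Acard unfolding k_def A_def[symmetric] by auto
  show ?thesis
  proof (cases "k = 0")
    case True
    then have "card A = 0" using kA by simp
    then show ?thesis unfolding A_def[symmetric] by (simp add: sum_nonneg)
  next
    case False
    have c1: "(\<Sum>\<sigma>\<in>B. \<bar>Xf V \<chi> g \<sigma> - K\<bar>) \<ge> (\<Sum>\<sigma>\<in>B. 13/32 * (N \<sigma> / (2 * sqrt k)))"
      unfolding step1
    proof (rule sum_mono)
      fix \<sigma> assume s: "\<sigma> \<in> B"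
      have "13/32 * (N \<sigma> / (2 * sqrt k)) \<le> 13/32 * sqrt (N \<sigma> / 4)"
        using step3[of \<sigma>] by simp
      then show "13/32 * (N \<sigma> / (2 * sqrt k)) \<le> swavg ps (\<lambda>\<sigma>. \<bar>Xf V \<chi> g \<sigma> - K\<bar>) \<sigma>"
        using step2[OF s] by linarith
    qed
    have c2: "(\<Sum>\<sigma>\<in>B. 13/32 * (N \<sigma> / (2 * sqrt k))) = 13/(64 * sqrt k) * (\<Sum>\<sigma>\<in>B. N \<sigma>)"
      by (simp add: sum_distrib_left sum_divide_distrib)
    have c3: "13/(64 * sqrt k) * (\<Sum>\<sigma>\<in>B. N \<sigma>) \<ge> 13/(64 * sqrt k) * (k * (\<gamma> * card B))"
      using step4 by (intro mult_left_mono) auto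
    have c4: "13/(64 * sqrt k) * (k * (\<gamma> * card B)) = card B * (13/64 * \<gamma> * sqrt k)"
    proof -
      have "real k = sqrt k * sqrt k" by simp
      then show ?thesis using False by (simp add: field_simps)
    qed
    have c5: "card B * (13/64 * \<gamma> * sqrt k) \<ge> card B * (13/64 * \<gamma> * sqrt (card A / 2))"
      using kA g0 by (intro mult_left_mono) auto
    have "(\<Sum>\<sigma>\<in>B. \<bar>Xf V \<chi> g \<sigma> - K\<bar>) \<ge> card B * (13/64 * \<gamma> * sqrt (card A / 2))"
      using c1 c2 c3 c4 c5 by linarith
    then show ?thesis unfolding A_def B_def .
  qed
qed

lemma simple_finite: "simple_graph n E \<Longrightarrow> finite E"
  unfolding simple_graph_def by (rule finite_subset[of _ "Pow {..<n}"]) auto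

lemma double_count:
  assumes "simple_graph n E"
  shows "(\<Sum>a<n. \<Sum>b<n. if {a,b} \<in> E then 1 else (0::real)) = 2 * real (card E)"
proof -
  define PS where "PS = {p \<in> {..<n} \<times> {..<n}. {fst p, snd p} \<in> E}"
  have finE: "finite E" using simple_finite[OF assms] .
  have "(\<Sum>a<n. \<Sum>b<n. if {a,b} \<in> E then 1 else (0::real)) = (\<Sum>p\<in>{..<n} \<times> {..<n}. if {fst p, snd p} \<in> E then 1 else (0::real))"
    by (simp add: sum.cartesian_product case_prod_beta)
  also have "\<dots> = real (card PS)" unfolding PS_def by (simp add: sum_indicator_card)
  also have "PS = (\<Union>e\<in>E. {p. {fst p, snd p} = e})"
  proof
    show "PS \<subseteq> (\<Union>e\<in>E. {p. {fst p, snd p} = e})" unfolding PS_def by auto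
    show "(\<Union>e\<in>E. {p. {fst p, snd p} = e}) \<subseteq> PS"
    proof
      fix p assume "p \<in> (\<Union>e\<in>E. {p. {fst p, snd p} = e})"
      then have "{fst p, snd p} \<in> E" by auto
      then obtain u v where "{fst p, snd p} = {u, v}" "u < n" "v < n"
        using assms unfolding simple_graph_def by blast
      then have "fst p < n" "snd p < n" by (auto simp: doubleton_eq_iff)
      with \<open>{fst p, snd p} \<in> E\<close> show "p \<in> PS" unfolding PS_def by (simp add: mem_Times_iff)
    qed
  qed
  also have "card (\<Union>e\<in>E. {p. {fst p, snd p} = e}) = (\<Sum>e\<in>E. card {p. {fst p, snd p} = e})"
  proof (rule card_UN_disjoint[OF finE])
    show "\<forall>e\<in>E. finite {p. {fst p, snd p} = e}"
    proof
      fix e assume "e \<in> E"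
      then obtain u v where "e = {u, v}" using assms unfolding simple_graph_def by blast
      then have "{p. {fst p, snd p} = e} = {(u,v),(v,u)}" by (auto simp: doubleton_eq_iff)
      then show "finite {p. {fst p, snd p} = e}" by simp
    qed
  qed auto
  also have "(\<Sum>e\<in>E. card {p. {fst p, snd p} = e}) = (\<Sum>e\<in>E. 2)"
  proof (rule sum.cong)
    fix e assume "e \<in> E"
    then obtain u v where "e = {u, v}" "u \<noteq> v" using assms unfolding simple_graph_def by blast
    then have "{p. {fst p, snd p} = e} = {(u,v),(v,u)}" by (auto simp: doubleton_eq_iff)
    then show "card {p. {fst p, snd p} = e} = 2" using \<open>u \<noteq> v\<close> by simp
  qed simp
  finally show ?thesis by simp
qed

lemma copy_count:
  assumes F: "simple_graph n F" and P: "bij_betw P {..<n} {..<n}"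
  shows "real (card ((\<lambda>e. P ` e) ` F \<inter> G)) =
     (\<Sum>a<n. \<Sum>b<n. (if {a,b} \<in> F then 1 else 0) * (if {P a, P b} \<in> G then 1 else (0::real))) / 2"
proof -
  define E where "E = {e\<in>F. P ` e \<in> G}"
  have sE: "simple_graph n E" using F unfolding simple_graph_def E_def by auto
  have sub: "\<forall>e\<in>F. e \<subseteq> {..<n}" using F unfolding simple_graph_def by auto
  have inj: "inj_on (\<lambda>e. P ` e) F"
  proof (rule inj_onI)
    fix e e' assume "e \<in> F" "e' \<in> F" "P ` e = P ` e'"
    moreover have "inj_on P {..<n}" using P by (simp add: bij_betw_def)
    ultimately show "e = e'" using sub inj_on_image_eq_iff[of P "{..<n}" e e'] by blast
  qed
  have "(\<lambda>e. P ` e) ` F \<inter> G = (\<lambda>e. P ` e) ` E" unfolding E_def by auto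
  then have "card ((\<lambda>e. P ` e) ` F \<inter> G) = card E"
    using inj by (simp add: card_image E_def inj_on_subset[of _ F])
  moreover have "(\<Sum>a<n. \<Sum>b<n. (if {a,b} \<in> F then 1 else 0) * (if {P a, P b} \<in> G then 1 else (0::real)))
      = (\<Sum>a<n. \<Sum>b<n. if {a,b} \<in> E then 1 else (0::real))"
    unfolding E_def by (intro sum.cong refl) auto
  ultimately show ?thesis using double_count[OF sE] by simp
qed

locale twoside =
  fixes n :: nat and U V X Y :: "nat set" and m :: nat and u u' x x' \<rho> :: "nat \<Rightarrow> nat"
    and F G :: "nat set set"
  assumes UV: "U \<union> V = {..<n}" "U \<inter> V = {}" and XY: "X \<union> Y = {..<n}" "X \<inter> Y = {}"
    and uinj: "inj_on u {..<m}" "inj_on u' {..<m}" "u`{..<m} \<inter> u'`{..<m} = {}" "u`{..<m} \<subseteq> U" "u'`{..<m} \<subseteq> U"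
    and xinj: "inj_on x {..<m}" "inj_on x' {..<m}" "x`{..<m} \<inter> x'`{..<m} = {}" "x`{..<m} \<subseteq> X" "x'`{..<m} \<subseteq> X"
    and rho: "bij_betw \<rho> U X" "\<And>i. i < m \<Longrightarrow> \<rho> (u i) = x i" "\<And>i. i < m \<Longrightarrow> \<rho> (u' i) = x' i"
    and Fs: "simple_graph n F"
begin

definition Tsw :: "nat set \<Rightarrow> nat \<Rightarrow> nat" where
  "Tsw S y = (if y \<in> x`S then x' (inv_into S x y) else if y \<in> x'`S then x (inv_into S x' y) else y)"

lemma Tsw_x: assumes "S \<subseteq> {..<m}" "i < m" shows "Tsw S (x i) = (if i \<in> S then x' i else x i)"
proof (cases "i \<in> S")
  case True
  have "inj_on x S" using xinj(1) assms(1) inj_on_subset by blast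
  then show ?thesis using True by (simp add: Tsw_def)
next
  case False
  have n1: "x i \<notin> x ` S" using False xinj(1) assms by (auto simp: inj_on_def)
  have n2: "x i \<notin> x' ` S" using xinj(3) assms by auto
  show ?thesis using False n1 n2 by (simp add: Tsw_def)
qed

lemma Tsw_x': assumes "S \<subseteq> {..<m}" "i < m" shows "Tsw S (x' i) = (if i \<in> S then x i else x' i)"
proof (cases "i \<in> S")
  case True
  have "inj_on x' S" using xinj(2) assms(1) inj_on_subset by blast
  moreover have "x' i \<notin> x ` S" using xinj(3) assms by auto
  ultimately show ?thesis using True by (simp add: Tsw_def)
next
  case False
  have n1: "x' i \<notin> x' ` S" using False xinj(2) assms by (auto simp: inj_on_def)
  have n2: "x' i \<notin> x ` S" using xinj(3) assms by auto
  show ?thesis using False n1 n2 by (simp add: Tsw_def)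
qed

lemma Tsw_other: assumes "S \<subseteq> {..<m}" "y \<notin> x`{..<m}" "y \<notin> x'`{..<m}" shows "Tsw S y = y"
  using assms by (auto simp: Tsw_def)

lemma Tsw_invol: assumes "S \<subseteq> {..<m}" shows "Tsw S (Tsw S y) = y"
proof -
  consider (a) i where "i < m" "y = x i" | (b) i where "i < m" "y = x' i" | (c) "y \<notin> x`{..<m}" "y \<notin> x'`{..<m}"
    by (metis imageE lessThan_iff)
  then show ?thesis
  proof cases
    case a then show ?thesis using Tsw_x[OF assms] Tsw_x'[OF assms] by simp
  next
    case b then show ?thesis using Tsw_x[OF assms] Tsw_x'[OF assms] by simp
  next
    case c then show ?thesis using Tsw_other[OF assms] by simp
  qed
qed

lemma Tsw_X: assumes "S \<subseteq> {..<m}" "y \<in> X" shows "Tsw S y \<in> X"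
proof -
  consider (a) i where "i < m" "y = x i" | (b) i where "i < m" "y = x' i" | (c) "y \<notin> x`{..<m}" "y \<notin> x'`{..<m}"
    by (metis imageE lessThan_iff)
  then show ?thesis
  proof cases
    case a then show ?thesis using Tsw_x[OF assms(1)] xinj by auto
  next
    case b then show ?thesis using Tsw_x'[OF assms(1)] xinj by auto
  next
    case c then show ?thesis using Tsw_other[OF assms(1)] assms(2) by simp
  qed
qed

lemma Tsw_bij: "S \<subseteq> {..<m} \<Longrightarrow> bij_betw (Tsw S) X X"
  by (rule bij_betw_byWitness[where f'="Tsw S"]) (auto simp: Tsw_invol Tsw_X)

definition Pm :: "(nat \<Rightarrow> nat) \<Rightarrow> nat set \<Rightarrow> nat \<Rightarrow> nat" where
  "Pm \<sigma> S a = (if a \<in> V then \<sigma> a else Tsw S (\<rho> a))"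

lemma Pm_bij: assumes "S \<subseteq> {..<m}" "bij_betw \<sigma> V Y" shows "bij_betw (Pm \<sigma> S) {..<n} {..<n}"
proof -
  have b1: "bij_betw (Pm \<sigma> S) U X"
  proof -
    have "bij_betw (Tsw S \<circ> \<rho>) U X" using bij_betw_trans[OF rho(1) Tsw_bij[OF assms(1)]] .
    moreover have "bij_betw (Pm \<sigma> S) U X = bij_betw (Tsw S \<circ> \<rho>) U X"
      by (rule bij_betw_cong) (use UV(2) in \<open>auto simp: Pm_def\<close>)
    ultimately show ?thesis by simp
  qed
  have b2: "bij_betw (Pm \<sigma> S) V Y"
  proof -
    have "bij_betw (Pm \<sigma> S) V Y = bij_betw \<sigma> V Y" by (rule bij_betw_cong) (auto simp: Pm_def)
    then show ?thesis using assms(2) by simp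
  qed
  show ?thesis using bij_betw_combine[OF b1 b2 XY(2)] UV(1) XY(1) by simp
qed

definition Fi :: "nat \<Rightarrow> nat \<Rightarrow> real" where "Fi a b = (if {a,b} \<in> F then 1 else 0)"
definition Gi :: "nat \<Rightarrow> nat \<Rightarrow> real" where "Gi a b = (if {a,b} \<in> G then 1 else 0)"

definition hc :: "(nat \<Rightarrow> nat) \<Rightarrow> nat set \<Rightarrow> real" where
  "hc \<sigma> S = (\<Sum>a<n. \<Sum>b<n. Fi a b * Gi (Pm \<sigma> S a) (Pm \<sigma> S b))"

lemma hc_card: assumes "S \<subseteq> {..<m}" "bij_betw \<sigma> V Y"
  shows "real (card ((\<lambda>e. Pm \<sigma> S ` e) ` F \<inter> G)) = hc \<sigma> S / 2"
  unfolding hc_def Fi_def Gi_def using copy_count[OF Fs Pm_bij[OF assms]] by simp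

definition chi :: "nat \<Rightarrow> nat \<Rightarrow> real" where "chi i b = Fi (u i) b - Fi (u' i) b"
definition gg :: "nat \<Rightarrow> nat \<Rightarrow> real" where "gg i y = Gi (x' i) y - Gi (x i) y"

end

context twoside begin

lemma finU: "finite U" and finV: "finite V" using UV(1) finite_subset[of _ "{..<n}"] by auto

lemma split_sum: "(\<Sum>a<n. f a) = (\<Sum>a\<in>U. f a) + (\<Sum>a\<in>V. (f a :: real))"
proof -
  have "(\<Sum>a<n. f a) = (\<Sum>a\<in>U \<union> V. f a)" using UV(1) by simp
  also have "\<dots> = (\<Sum>a\<in>U. f a) + (\<Sum>a\<in>V. f a)" by (rule sum.union_disjoint[OF finU finV UV(2)])
  finally show ?thesis .
qed

lemma Fi_sym: "Fi a b = Fi b a" by (simp add: Fi_def insert_commute)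
lemma Gi_sym: "Gi a b = Gi b a" by (simp add: Gi_def insert_commute)

lemma rho_special:
  assumes "a \<in> U" "a \<notin> u`{..<m}" "a \<notin> u'`{..<m}"
  shows "\<rho> a \<notin> x`{..<m}" "\<rho> a \<notin> x'`{..<m}"
proof -
  have inj: "inj_on \<rho> U" using rho(1) by (simp add: bij_betw_def)
  show "\<rho> a \<notin> x`{..<m}"
  proof
    assume "\<rho> a \<in> x`{..<m}"
    then obtain i where i: "i < m" "\<rho> a = x i" by auto
    then have "\<rho> a = \<rho> (u i)" using rho(2) by simp
    moreover have "u i \<in> U" using uinj(4) i by auto
    ultimately have "a = u i" using inj assms(1) by (auto simp: inj_on_def)
    then show False using assms(2) i by auto
  qed
  show "\<rho> a \<notin> x'`{..<m}"
  proof
    assume "\<rho> a \<in> x'`{..<m}"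
    then obtain i where i: "i < m" "\<rho> a = x' i" by auto
    then have "\<rho> a = \<rho> (u' i)" using rho(3) by simp
    moreover have "u' i \<in> U" using uinj(5) i by auto
    ultimately have "a = u' i" using inj assms(1) by (auto simp: inj_on_def)
    then show False using assms(3) i by auto
  qed
qed

lemma alt:
  assumes S: "S \<subseteq> {..<m}"
  shows "hc \<sigma>1 S - hc \<sigma>2 S - hc \<sigma>1 ({..<m} - S) + hc \<sigma>2 ({..<m} - S) =
    2 * (\<Sum>i<m. (if i \<in> S then 1 else -1) * (Xf V (chi i) (gg i) \<sigma>1 - Xf V (chi i) (gg i) \<sigma>2))"
proof -
  define Sc where "Sc = {..<m} - S"
  have Sc: "Sc \<subseteq> {..<m}" by (auto simp: Sc_def)
  define t where "t a b = Fi a b * (Gi (Pm \<sigma>1 S a) (Pm \<sigma>1 S b) - Gi (Pm \<sigma>2 S a) (Pm \<sigma>2 S b)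
       - Gi (Pm \<sigma>1 Sc a) (Pm \<sigma>1 Sc b) + Gi (Pm \<sigma>2 Sc a) (Pm \<sigma>2 Sc b))" for a b
  have tsym: "t a b = t b a" for a b unfolding t_def using Fi_sym Gi_sym by metis
  have "hc \<sigma>1 S - hc \<sigma>2 S - hc \<sigma>1 Sc + hc \<sigma>2 Sc = (\<Sum>a<n. \<Sum>b<n. t a b)"
    unfolding hc_def t_def by (simp add: sum.distrib sum_subtractf algebra_simps)
  also have "\<dots> = (\<Sum>a\<in>U. \<Sum>b\<in>U. t a b) + (\<Sum>a\<in>U. \<Sum>b\<in>V. t a b) + ((\<Sum>a\<in>V. \<Sum>b\<in>U. t a b) + (\<Sum>a\<in>V. \<Sum>b\<in>V. t a b))"
    by (simp add: split_sum sum.distrib)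
  also have "(\<Sum>a\<in>U. \<Sum>b\<in>U. t a b) = 0"
    by (intro sum.neutral ballI) (use UV(2) in \<open>auto simp: t_def Pm_def\<close>)
  also have "(\<Sum>a\<in>V. \<Sum>b\<in>V. t a b) = 0"
    by (intro sum.neutral ballI) (auto simp: t_def Pm_def)
  also have "(\<Sum>a\<in>V. \<Sum>b\<in>U. t a b) = (\<Sum>a\<in>U. \<Sum>b\<in>V. t a b)"
    by (subst sum.swap) (simp add: tsym)
  finally have e1: "hc \<sigma>1 S - hc \<sigma>2 S - hc \<sigma>1 Sc + hc \<sigma>2 Sc = 2 * (\<Sum>a\<in>U. \<Sum>b\<in>V. t a b)" by simp
  define f where "f a = (\<Sum>b\<in>V. t a b)" for a
  define Sp where "Sp = u`{..<m} \<union> u'`{..<m}"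
  have Sp: "Sp \<subseteq> U" using uinj by (auto simp: Sp_def)
  have "(\<Sum>a\<in>U. f a) = (\<Sum>a\<in>Sp. f a)"
  proof (rule sum.mono_neutral_right[OF finU Sp])
    show "\<forall>a\<in>U - Sp. f a = 0"
    proof
      fix a assume a: "a \<in> U - Sp"
      then have aV: "a \<notin> V" using UV(2) by auto
      have r: "Tsw S (\<rho> a) = \<rho> a" "Tsw Sc (\<rho> a) = \<rho> a"
        using Tsw_other[OF S] Tsw_other[OF Sc] rho_special[of a] a by (auto simp: Sp_def)
      show "f a = 0" unfolding f_def
        by (intro sum.neutral ballI) (use aV r UV(2) in \<open>auto simp: t_def Pm_def\<close>)
    qed
  qed
  also have "\<dots> = (\<Sum>a\<in>u`{..<m}. f a) + (\<Sum>a\<in>u'`{..<m}. f a)"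
    unfolding Sp_def by (rule sum.union_disjoint) (use uinj in auto)
  also have "\<dots> = (\<Sum>i<m. f (u i)) + (\<Sum>i<m. f (u' i))"
    using sum.reindex[OF uinj(1), of f] sum.reindex[OF uinj(2), of f] by simp
  also have "\<dots> = (\<Sum>i<m. f (u i) + f (u' i))" by (simp add: sum.distrib)
  also have "\<dots> = (\<Sum>i<m. (if i \<in> S then 1 else -1) * (Xf V (chi i) (gg i) \<sigma>1 - Xf V (chi i) (gg i) \<sigma>2))"
  proof (rule sum.cong[OF refl])
    fix i assume i: "i \<in> {..<m}"
    have uU: "u i \<notin> V" "u' i \<notin> V" using uinj(4,5) UV(2) i by auto
    have sc: "i \<in> Sc \<longleftrightarrow> i \<notin> S" using i by (auto simp: Sc_def)
    have pt: "t (u i) b + t (u' i) b = (if i \<in> S then 1 else -1) * (chi i b * gg i (\<sigma>1 b) - chi i b * gg i (\<sigma>2 b))"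
      if b: "b \<in> V" for b
      using b uU i Tsw_x[OF S, of i] Tsw_x'[OF S, of i] Tsw_x[OF Sc, of i] Tsw_x'[OF Sc, of i] sc rho(2,3)[of i]
      by (auto simp: t_def Pm_def chi_def gg_def algebra_simps)
    have "f (u i) + f (u' i) = (\<Sum>b\<in>V. t (u i) b + t (u' i) b)" by (simp add: f_def sum.distrib)
    also have "\<dots> = (\<Sum>b\<in>V. (if i \<in> S then 1 else -1) * (chi i b * gg i (\<sigma>1 b) - chi i b * gg i (\<sigma>2 b)))"
      by (rule sum.cong) (auto simp: pt)
    also have "\<dots> = (if i \<in> S then 1 else -1) * (Xf V (chi i) (gg i) \<sigma>1 - Xf V (chi i) (gg i) \<sigma>2)"
      by (simp add: Xf_def sum_distrib_left sum_subtractf)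
    finally show "f (u i) + f (u' i) = (if i \<in> S then 1 else -1) * (Xf V (chi i) (gg i) \<sigma>1 - Xf V (chi i) (gg i) \<sigma>2)" .
  qed
  finally show ?thesis using e1 unfolding Sc_def f_def by simp
qed

end

lemma per_i_bound:
  fixes F G :: "nat set set" and d :: nat
  assumes fin: "finite V" "finite Y" "card V = card Y"
    and A1: "real (card (nbrs F V a - nbrs F V a')) \<ge> 0.01 * real d"
    and A2: "real (card (nbrs F V a - nbrs F V a')) \<le> 2/3 * real (card V)"
    and hd: "\<bar>real (deg G Y p) - real (deg G Y p')\<bar> \<le> 0.00002 * real (card Y)"
    and hs: "0.02 * real (card Y) \<le> real (card (nbrs G Y p \<union> nbrs G Y p' - nbrs G Y p \<inter> nbrs G Y p'))"
  shows "(\<Sum>\<sigma>\<in>Bs V Y. \<bar>Xf V (\<lambda>b. (if {a,b} \<in> F then 1 else 0) - (if {a',b} \<in> F then 1 else 0))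
            (\<lambda>y. (if {p',y} \<in> G then 1 else 0) - (if {p,y} \<in> G then 1 else 0)) \<sigma> - K\<bar>)
         \<ge> card (Bs V Y) * ((13/64 * 0.009 / 15) * sqrt (real d))"
proof -
  define \<chi> :: "nat \<Rightarrow> real" where "\<chi> = (\<lambda>b. (if {a,b} \<in> F then 1 else 0) - (if {a',b} \<in> F then 1 else 0))"
  define g :: "nat \<Rightarrow> real" where "g = (\<lambda>y. (if {p',y} \<in> G then 1 else 0) - (if {p,y} \<in> G then 1 else 0))"
  define A where "A = nbrs F V a - nbrs F V a'"
  have Aeq: "{b\<in>V. \<chi> b = 1} = A" by (auto simp: A_def \<chi>_def nbrs_def split: if_splits)
  have chi: "\<forall>b\<in>V. \<chi> b \<in> {-1,0,1}" by (auto simp: \<chi>_def)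
  have gint: "\<forall>y\<in>Y. g y \<in> {-1,0,1}" by (auto simp: g_def)
  have finA: "finite A" "A \<subseteq> V" using fin by (auto simp: A_def nbrs_def)
  have Acard: "card {b\<in>V. \<chi> b = 1} \<le> 2 * card (V - {b\<in>V. \<chi> b = 1})"
  proof -
    have "card (V - A) = card V - card A" using finA fin by (simp add: card_Diff_subset)
    moreover have "card A \<le> card V" using finA fin(1) by (intro card_mono) auto
    moreover have "3 * real (card A) \<le> 2 * real (card V)" using A2 by (simp add: A_def)
    ultimately show ?thesis unfolding Aeq by linarith
  qed
  define Nx where "Nx = nbrs G Y p"
  define Nx' where "Nx' = nbrs G Y p'"
  define P where "P = Nx' - Nx"
  define Q where "Q = Nx - Nx'"
  have finN: "finite Nx" "finite Nx'" using fin by (auto simp: Nx_def Nx'_def nbrs_def)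
  have PQ: "card P \<ge> 0.009 * card Y \<and> card Q \<ge> 0.009 * card Y"
  proof -
    have c1: "card Nx = card (Nx \<inter> Nx') + card Q" unfolding Q_def using finN
      by (metis Diff_Diff_Int card_Diff_subset_Int card_mono inf_le1 le_add_diff_inverse finite_Int Diff_disjoint)
    have c2: "card Nx' = card (Nx \<inter> Nx') + card P" unfolding P_def using finN
      by (metis Diff_Diff_Int card_Diff_subset_Int card_mono inf_le2 le_add_diff_inverse finite_Int inf_commute)
    have c3: "Nx \<union> Nx' - Nx \<inter> Nx' = P \<union> Q" by (auto simp: P_def Q_def)
    have c4: "card (P \<union> Q) = card P + card Q"
      by (rule card_Un_disjoint) (use finN in \<open>auto simp: P_def Q_def\<close>)
    have "\<bar>real (card Nx) - real (card Nx')\<bar> \<le> 0.00002 * real (card Y)"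
      using hd by (simp add: deg_def Nx_def Nx'_def)
    moreover have "0.02 * real (card Y) \<le> real (card P) + real (card Q)"
      using hs c3 c4 by (simp add: Nx_def Nx'_def)
    ultimately have h: "\<bar>real (card Q) - real (card P)\<bar> \<le> 0.00002 * real (card Y)"
      "0.02 * real (card Y) \<le> real (card P) + real (card Q)" using c1 c2 by simp_all
    have "real (card Q) - real (card P) \<le> 0.00002 * real (card Y)"
       "real (card P) - real (card Q) \<le> 0.00002 * real (card Y)"
      using h(1) abs_le_iff[of "real (card Q) - real (card P)" "0.00002 * real (card Y)"] by linarith+
    then show ?thesis using h(2) by (simp; linarith)
  qed
  have gc: "\<forall>y\<in>Y. real (card {y'\<in>Y. g y' \<noteq> g y}) \<ge> 0.009 * card Y"
  proof
    fix y assume y: "y \<in> Y"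
    have sub: "P \<subseteq> Y" "Q \<subseteq> Y" by (auto simp: P_def Q_def Nx_def Nx'_def nbrs_def)
    have gP: "\<forall>z\<in>P. g z = 1" and gQ: "\<forall>z\<in>Q. g z = -1"
      by (auto simp: P_def Q_def Nx_def Nx'_def nbrs_def g_def insert_commute)
    show "real (card {y'\<in>Y. g y' \<noteq> g y}) \<ge> 0.009 * card Y"
    proof (cases "g y = 1")
      case True
      then have "Q \<subseteq> {y'\<in>Y. g y' \<noteq> g y}" using sub gQ by auto
      then have "card Q \<le> card {y'\<in>Y. g y' \<noteq> g y}" using fin by (intro card_mono) auto
      then show ?thesis using PQ by linarith
    next
      case False
      then have "P \<subseteq> {y'\<in>Y. g y' \<noteq> g y}" using sub gP by auto
      then have "card P \<le> card {y'\<in>Y. g y' \<noteq> g y}" using fin by (intro card_mono) auto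
      then show ?thesis using PQ by linarith
    qed
  qed
  have main: "(\<Sum>\<sigma>\<in>Bs V Y. \<bar>Xf V \<chi> g \<sigma> - K\<bar>) \<ge> card (Bs V Y) * (13/64 * 0.009 * sqrt (card {b\<in>V. \<chi> b = 1} / 2))"
    by (rule anticonc[OF fin chi gint Acard _ gc]) simp
  have "sqrt (card {b\<in>V. \<chi> b = 1} / 2) \<ge> sqrt (real d) / 15"
  proof -
    have "real (card {b\<in>V. \<chi> b = 1}) / 2 \<ge> real d / 225" using A1 unfolding Aeq A_def by simp
    then have "sqrt (card {b\<in>V. \<chi> b = 1} / 2) \<ge> sqrt (real d / 225)" by (rule real_sqrt_le_mono)
    moreover have "sqrt (real d / 225) = sqrt (real d) / 15" by (simp add: real_sqrt_divide)
    ultimately show ?thesis by simp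
  qed
  then have "card (Bs V Y) * (13/64 * 0.009 * sqrt (card {b\<in>V. \<chi> b = 1} / 2)) \<ge> card (Bs V Y) * ((13/64 * 0.009 / 15) * sqrt (real d))"
    by (intro mult_left_mono) auto
  with main show ?thesis unfolding \<chi>_def g_def by linarith
qed

lemma distinct_two:
  assumes "distinct (map f [0..<k] @ map g [0..<k])" "m \<le> k"
  shows "inj_on f {..<m}" "inj_on g {..<m}" "f`{..<m} \<inter> g`{..<m} = {}"
proof -
  have s: "set [0..<k] = {..<k}" by auto
  have d0: "inj_on f {..<k}" "inj_on g {..<k}" "f`{..<k} \<inter> g`{..<k} = {}"
    using assms(1) unfolding distinct_append distinct_map set_map s by auto
  note d = d0
  have sub: "{..<m} \<subseteq> {..<k}" using assms(2) by auto
  show "inj_on f {..<m}" "inj_on g {..<m}" using d(1,2) inj_on_subset[OF _ sub] by auto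
  show "f`{..<m} \<inter> g`{..<m} = {}" using d(3) image_mono[OF sub, of f] image_mono[OF sub, of g] by blast
qed

lemma construct_rho:
  assumes fin: "finite U" "finite X" "card U = card X" "finite I"
    and u: "inj_on u I" "inj_on u' I" "u`I \<inter> u'`I = {}" "u`I \<union> u'`I \<subseteq> U"
    and x: "inj_on x I" "inj_on x' I" "x`I \<inter> x'`I = {}" "x`I \<union> x'`I \<subseteq> X"
  shows "\<exists>\<rho>. bij_betw \<rho> U X \<and> (\<forall>i\<in>I. \<rho> (u i) = x i \<and> \<rho> (u' i) = x' i)"
proof -
  define SU where "SU = u`I \<union> u'`I"
  define SX where "SX = x`I \<union> x'`I"
  have cSU: "card SU = 2 * card I" unfolding SU_def
    using card_Un_disjoint[of "u`I" "u'`I"] u fin card_image by (simp add: card_image)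
  have cSX: "card SX = 2 * card I" unfolding SX_def
    using card_Un_disjoint[of "x`I" "x'`I"] x fin card_image by (simp add: card_image)
  have "card (U - SU) = card (X - SX)"
    using fin cSU cSX u(4) x(4) by (simp add: card_Diff_subset SU_def SX_def finite_subset)
  then obtain \<rho>0 where r0: "bij_betw \<rho>0 (U - SU) (X - SX)"
    using finite_same_card_bij[of "U - SU" "X - SX"] fin by auto
  define f1 where "f1 = x \<circ> the_inv_into I u"
  define f2 where "f2 = x' \<circ> the_inv_into I u'"
  have b1: "bij_betw f1 (u`I) (x`I)" unfolding f1_def
    using bij_betw_trans[OF bij_betw_the_inv_into[OF inj_on_imp_bij_betw[OF u(1)]] inj_on_imp_bij_betw[OF x(1)]] .
  have b2: "bij_betw f2 (u'`I) (x'`I)" unfolding f2_def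
    using bij_betw_trans[OF bij_betw_the_inv_into[OF inj_on_imp_bij_betw[OF u(2)]] inj_on_imp_bij_betw[OF x(2)]] .
  define \<rho> where "\<rho> a = (if a \<in> u`I then f1 a else if a \<in> u'`I then f2 a else \<rho>0 a)" for a
  have c1: "bij_betw \<rho> (u`I) (x`I)"
  proof -
    have "bij_betw \<rho> (u`I) (x`I) = bij_betw f1 (u`I) (x`I)" by (rule bij_betw_cong) (simp add: \<rho>_def)
    then show ?thesis using b1 by simp
  qed
  have c2: "bij_betw \<rho> (u'`I) (x'`I)"
  proof -
    have "bij_betw \<rho> (u'`I) (x'`I) = bij_betw f2 (u'`I) (x'`I)"
      by (rule bij_betw_cong) (use u(3) in \<open>auto simp: \<rho>_def\<close>)
    then show ?thesis using b2 by simp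
  qed
  have c3: "bij_betw \<rho> (U - SU) (X - SX)"
  proof -
    have "bij_betw \<rho> (U - SU) (X - SX) = bij_betw \<rho>0 (U - SU) (X - SX)"
      by (rule bij_betw_cong) (auto simp: \<rho>_def SU_def)
    then show ?thesis using r0 by simp
  qed
  have "bij_betw \<rho> (u`I \<union> u'`I) (x`I \<union> x'`I)" by (rule bij_betw_combine[OF c1 c2 x(3)])
  then have "bij_betw \<rho> ((u`I \<union> u'`I) \<union> (U - SU)) ((x`I \<union> x'`I) \<union> (X - SX))"
    by (rule bij_betw_combine[OF _ c3]) (auto simp: SX_def)
  moreover have "(u`I \<union> u'`I) \<union> (U - SU) = U" "(x`I \<union> x'`I) \<union> (X - SX) = X"
    using u(4) x(4) by (auto simp: SU_def SX_def)
  ultimately have "bij_betw \<rho> U X" by simp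
  moreover have "\<forall>i\<in>I. \<rho> (u i) = x i \<and> \<rho> (u' i) = x' i"
  proof
    fix i assume i: "i \<in> I"
    have "\<rho> (u i) = x i" using i u(1) by (simp add: \<rho>_def f1_def the_inv_into_f_f)
    moreover have "u' i \<notin> u`I" using u(3) i by auto
    then have "\<rho> (u' i) = x' i" using i u(2) by (simp add: \<rho>_def f2_def the_inv_into_f_f)
    ultimately show "\<rho> (u i) = x i \<and> \<rho> (u' i) = x' i" by simp
  qed
  ultimately show ?thesis by blast
qed

lemma exists_ge_avg:
  assumes "finite A" "A \<noteq> {}" "(\<Sum>a\<in>A. f a) \<ge> real (card A) * c"
  shows "\<exists>a\<in>A. f a \<ge> (c::real)"
proof (rule ccontr)
  assume "\<not> ?thesis"
  then have "\<forall>a\<in>A. f a < c" by auto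
  then have "(\<Sum>a\<in>A. f a) < (\<Sum>a\<in>A. c)" using assms(1,2) by (intro sum_strict_mono) auto
  then show False using assms(3) by simp
qed

lemma main_bound:
  fixes F G :: "nat set set" and t :: real
  assumes Fs: "simple_graph n F" and gg: "guest_good n F t" and hg: "host_good n (1/100000) G"
  shows "\<exists>F0. is_copy n F F0 \<and> \<bar>real (card (F0 \<inter> G)) - real (card F) / 2\<bar> \<ge> (1/100000) * t"
proof -
  obtain U V m u u' d where
    g1: "U \<union> V = {..<n}" and g2: "U \<inter> V = {}" and g3: "card U = n div 2"
    and g4: "real m \<le> 0.05 * real n"
    and g5: "distinct (map u [0..<m] @ map u' [0..<m])"
    and g6: "\<forall>i<m. u i \<in> U \<and> u' i \<in> U \<and> d i \<ge> 1"
    and g7: "t = (\<Sum>i<m. sqrt (real (d i)))"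
    and g8: "\<forall>i<m.
          real (card (nbrs F V (u i) - nbrs F V (u' i))) \<ge> 0.01 * real (d i) \<and>
          real (card (nbrs F V (u i) - nbrs F V (u' i))) \<le> 2/3 * real (card V) \<and>
          real (card (nbrs F V (u' i) - nbrs F V (u i))) \<le> 2/3 * real (card V) \<and>
          (independent F U \<or>
           \<bar>real (deg F V (u i)) - real (deg F V (u' i))\<bar> \<le> 20 * sqrt (real (d i)))"
    using gg unfolding guest_good_def by blast
  define mh where "mh = nat \<lfloor>0.05 * real n\<rfloor>"
  obtain X Y x x' where
    h1: "X \<union> Y = {..<n}" and h2: "X \<inter> Y = {}" and h3: "card X = n div 2"
    and h4: "distinct (map x [0..<mh] @ map x' [0..<mh])"
    and h5: "\<forall>i<mh. x i \<in> X \<and> x' i \<in> X \<and>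
          \<bar>real (deg G Y (x i)) - real (deg G Y (x' i))\<bar> \<le> (1/100000) * real n \<and>
          0.02 * real (card Y) \<le> real (card (nbrs G Y (x i) \<union> nbrs G Y (x' i)
                                   - nbrs G Y (x i) \<inter> nbrs G Y (x' i))) \<and>
          real (card (nbrs G Y (x i) \<union> nbrs G Y (x' i)
                     - nbrs G Y (x i) \<inter> nbrs G Y (x' i))) \<le> 0.98 * real (card Y) \<and>
          0.1 * real (card Y) \<le> real (deg G Y (x i)) \<and>
          real (deg G Y (x i)) \<le> 0.9 * real (card Y) \<and>
          0.1 * real (card Y) \<le> real (deg G Y (x' i)) \<and>
          real (deg G Y (x' i)) \<le> 0.9 * real (card Y)"
    using hg unfolding host_good_def Let_def mh_def by blast
  have mmh: "m \<le> mh"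
  proof -
    have "int m \<le> \<lfloor>0.05 * real n\<rfloor>" using g4 by (simp add: le_floor_iff)
    then show ?thesis unfolding mh_def by linarith
  qed
  have ud: "inj_on u {..<m}" "inj_on u' {..<m}" "u`{..<m} \<inter> u'`{..<m} = {}"
    using distinct_two[OF g5 order_refl] by auto
  have xd: "inj_on x {..<m}" "inj_on x' {..<m}" "x`{..<m} \<inter> x'`{..<m} = {}"
    using distinct_two[OF h4 mmh] by auto
  have finU: "finite U" "finite V" using g1 finite_subset[of _ "{..<n}"] by auto
  have finX: "finite X" "finite Y" using h1 finite_subset[of _ "{..<n}"] by auto
  have cUV: "card U + card V = n" using card_Un_disjoint[OF finU g2] g1 by simp
  have cXY: "card X + card Y = n" using card_Un_disjoint[OF finX h2] h1 by simp
  have cVY: "card V = card Y" using cUV cXY g3 h3 by simp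
  have cUX: "card U = card X" using g3 h3 by simp
  have Yn: "real n \<le> 2 * real (card Y)" using cXY h3 by linarith
  have uU: "u`{..<m} \<union> u'`{..<m} \<subseteq> U" using g6 by auto
  have xX: "x`{..<m} \<union> x'`{..<m} \<subseteq> X" using h5 mmh by auto
  obtain \<rho> where rho: "bij_betw \<rho> U X" "\<forall>i\<in>{..<m}. \<rho> (u i) = x i \<and> \<rho> (u' i) = x' i"
    using construct_rho[OF finU(1) finX(1) cUX finite_lessThan ud(1) ud(2) ud(3) uU xd(1) xd(2) xd(3) xX] by auto
  interpret T: twoside n U V X Y m u u' x x' \<rho> F G
    by unfold_locales (use g1 g2 h1 h2 ud xd uU xX rho Fs in auto)
  define B where "B = Bs V Y"
  have finB: "finite B" and neB: "B \<noteq> {}" using Bs_finite Bs_ne finU finX cVY by (auto simp: B_def)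
  define c0 :: real where "c0 = 13/64 * 0.009 / 15"
  define Xi where "Xi i \<sigma> = Xf V (T.chi i) (T.gg i) \<sigma>" for i \<sigma>
  have per: "(\<Sum>\<sigma>\<in>B. \<bar>Xi i \<sigma> - K\<bar>) \<ge> card B * (c0 * sqrt (real (d i)))" if i: "i < m" for i K
  proof -
    have ce: "T.chi i = (\<lambda>b. (if {u i,b} \<in> F then 1 else 0) - (if {u' i,b} \<in> F then 1 else 0))"
      by (rule ext) (simp add: T.chi_def T.Fi_def)
    have ge: "T.gg i = (\<lambda>y. (if {x' i,y} \<in> G then 1 else 0) - (if {x i,y} \<in> G then 1 else 0))"
      by (rule ext) (simp add: T.gg_def T.Gi_def)
    have ih: "i < mh" using i mmh by simp
    have hd: "\<bar>real (deg G Y (x i)) - real (deg G Y (x' i))\<bar> \<le> 0.00002 * real (card Y)"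
      using h5 ih Yn by fastforce
    have hs: "0.02 * real (card Y) \<le> real (card (nbrs G Y (x i) \<union> nbrs G Y (x' i) - nbrs G Y (x i) \<inter> nbrs G Y (x' i)))"
      using h5 ih by blast
    show ?thesis unfolding Xi_def ce ge B_def c0_def
      using per_i_bound[where a="u i" and a'="u' i" and d="d i" and K=K and F=F, OF finU(2) finX(2) cVY _ _ hd hs] g8 i by auto
  qed
  obtain \<sigma>2 where s2: "\<sigma>2 \<in> B" using neB by blast
  define \<Phi> where "\<Phi> \<sigma> = (\<Sum>i<m. \<bar>Xi i \<sigma> - Xi i \<sigma>2\<bar>)" for \<sigma>
  have t0: "t \<ge> 0" unfolding g7 by (intro sum_nonneg) auto
  have "(\<Sum>\<sigma>\<in>B. \<Phi> \<sigma>) = (\<Sum>i<m. \<Sum>\<sigma>\<in>B. \<bar>Xi i \<sigma> - Xi i \<sigma>2\<bar>)" unfolding \<Phi>_def by (rule sum.swap)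
  also have "\<dots> \<ge> (\<Sum>i<m. card B * (c0 * sqrt (real (d i))))" by (rule sum_mono) (use per in auto)
  also have "(\<Sum>i<m. card B * (c0 * sqrt (real (d i)))) = card B * (c0 * t)"
    unfolding g7 by (simp add: sum_distrib_left)
  finally obtain \<sigma>1 where s1: "\<sigma>1 \<in> B" and P1: "\<Phi> \<sigma>1 \<ge> c0 * t"
    using exists_ge_avg[OF finB neB] by blast
  have bj: "bij_betw \<sigma>1 V Y" "bij_betw \<sigma>2 V Y" using s1 s2 by (auto simp: B_def Bs_def)
  define S where "S = {i\<in>{..<m}. Xi i \<sigma>1 \<ge> Xi i \<sigma>2}"
  define Sc where "Sc = {..<m} - S"
  have S: "S \<subseteq> {..<m}" "Sc \<subseteq> {..<m}" by (auto simp: S_def Sc_def)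
  have sgn: "(\<Sum>i<m. (if i \<in> S then 1 else -1) * (Xi i \<sigma>1 - Xi i \<sigma>2)) = \<Phi> \<sigma>1"
    unfolding \<Phi>_def by (rule sum.cong) (auto simp: S_def)
  have alt: "T.hc \<sigma>1 S - T.hc \<sigma>2 S - T.hc \<sigma>1 Sc + T.hc \<sigma>2 Sc = 2 * \<Phi> \<sigma>1"
    using T.alt[OF S(1), of \<sigma>1 \<sigma>2] sgn unfolding Sc_def Xi_def by simp
  define C where "C \<sigma> S' = real (card ((\<lambda>e. T.Pm \<sigma> S' ` e) ` F \<inter> G))" for \<sigma> S'
  have Cs: "C \<sigma>1 S = T.hc \<sigma>1 S / 2" "C \<sigma>2 S = T.hc \<sigma>2 S / 2" "C \<sigma>1 Sc = T.hc \<sigma>1 Sc / 2" "C \<sigma>2 Sc = T.hc \<sigma>2 Sc / 2"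
    unfolding C_def using T.hc_card S bj by auto
  have cp: "is_copy n F ((\<lambda>e. T.Pm \<sigma> S' ` e) ` F)" if "S' \<subseteq> {..<m}" "bij_betw \<sigma> V Y" for \<sigma> S'
    unfolding is_copy_def using T.Pm_bij[OF that] by blast
  define e where "e = real (card F) / 2"
  have key: "C \<sigma>1 S - C \<sigma>2 S - C \<sigma>1 Sc + C \<sigma>2 Sc \<ge> c0 * t" using Cs alt P1 by simp
  have bt: "(1/100000) * t \<le> c0 * t / 4" using t0 unfolding c0_def by simp
  have "\<bar>C \<sigma>1 S - e\<bar> \<ge> c0 * t / 4 \<or> \<bar>C \<sigma>2 S - e\<bar> \<ge> c0 * t / 4 \<or> \<bar>C \<sigma>1 Sc - e\<bar> \<ge> c0 * t / 4 \<or> \<bar>C \<sigma>2 Sc - e\<bar> \<ge> c0 * t / 4"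
    using key by linarith
  then show ?thesis
  proof (elim disjE)
    assume "\<bar>C \<sigma>1 S - e\<bar> \<ge> c0 * t / 4"
    then show ?thesis using cp[OF S(1) bj(1)] bt unfolding C_def e_def by fastforce
  next
    assume "\<bar>C \<sigma>2 S - e\<bar> \<ge> c0 * t / 4"
    then show ?thesis using cp[OF S(1) bj(2)] bt unfolding C_def e_def by fastforce
  next
    assume "\<bar>C \<sigma>1 Sc - e\<bar> \<ge> c0 * t / 4"
    then show ?thesis using cp[OF S(2) bj(1)] bt unfolding C_def e_def by fastforce
  next
    assume "\<bar>C \<sigma>2 Sc - e\<bar> \<ge> c0 * t / 4"
    then show ?thesis using cp[OF S(2) bj(2)] bt unfolding C_def e_def by fastforce
  qed
qed

theorem lemma2p7:
  shows "\<exists>\<beta>::real. \<beta> > 0 \<and> (\<exists>n0::nat. \<forall>n\<ge>n0. \<forall>F G (t::real).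
           simple_graph n F \<longrightarrow> simple_graph n G \<longrightarrow>
           guest_good n F t \<longrightarrow> host_good n \<beta> G \<longrightarrow>
           (\<exists>F0. is_copy n F F0 \<and>
              \<bar>real (card (F0 \<inter> G)) - real (card F) / 2\<bar> \<ge> \<beta> * t))"
proof (intro exI[of _ "1/100000"] conjI exI[of _ 0] allI impI)
  show "(1/100000::real) > 0" by simp
next
  fix n :: nat and F G :: "nat set set" and t :: real
  assume "simple_graph n F" "guest_good n F t" "host_good n (1/100000) G"
  then show "\<exists>F0. is_copy n F F0 \<and> \<bar>real (card (F0 \<inter> G)) - real (card F) / 2\<bar> \<ge> (1/100000) * t"
    by (rule main_bound)
qed

end
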